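(* Let integers $r\ge1$, $n_i\ge1$, $l_{ij}\ge1$, $d_{ij}$ be as in the context. (i) For $0\le i\le r$ and $1\le j,j'\le n_i$ there exist integers $\alpha,\beta$ with $\nu(i,j,j')=\alpha\,\hat\nu(i,j)-\beta\,\hat\nu(i,j')$. (ii) For $0\le i_0\le r$ and $1\le j_i\le n_i$ ($i=0,\dots,r$) there exist integers $\beta_0,\dots,\beta_r$ with \[ \mu(j_0,\dots,j_r)=\beta_{i_0}\,\mu(j_0,\dots,j_{i_0-1},n_{i_0},j_{i_0+1},\dots,j_r)+\sum_{i_1\ne i_0}\beta_{i_1}\,\hat\nu(i_0,j_{i_0})\prod_{i\notin\{i_0,i_1\}}l_{ij_i}. \]
   Context: Integers $r\ge1$, $n_0,\dots,n_r\ge1$, $l_{ij}\in\mathbb{Z}_{\ge1}$, $d_{ij}\in\mathbb{Z}$ ($0\le i\le r$, $1\le j\le n_i$) with $\gcd(l_{ij},d_{ij})=1$ and $d_{i1}/l_{i1}>\dots>d_{in_i}/l_{in_i}$. Define $\mu(j_0,\dots,j_r)=\sum_{i_0=0}^r d_{i_0j_{i_0}}\prod_{i\ne i_0}l_{ij_i}$, $\nu(i,j,j')=l_{ij}d_{ij'}-l_{ij'}d_{ij}$ and $\hat\nu(i,j)=\nu(i,j,n_i)$. *)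

theory Defs
  imports Complex_Main
begin

text \<open>Data: l i j = l_{ij}, d i j = d_{ij}, indices i in {0..r}, j in {1..n i}.
  A tuple (j_0,...,j_r) is a function js :: nat => nat (only values on {0..r} matter).\<close>

definition mu :: "nat \<Rightarrow> (nat \<Rightarrow> nat \<Rightarrow> int) \<Rightarrow> (nat \<Rightarrow> nat \<Rightarrow> int) \<Rightarrow> (nat \<Rightarrow> nat) \<Rightarrow> int" where
  "mu r l d js = (\<Sum>i0\<in>{0..r}. d i0 (js i0) * (\<Prod>i\<in>{0..r} - {i0}. l i (js i)))"

definition nu :: "(nat \<Rightarrow> nat \<Rightarrow> int) \<Rightarrow> (nat \<Rightarrow> nat \<Rightarrow> int) \<Rightarrow> nat \<Rightarrow> nat \<Rightarrow> nat \<Rightarrow> int" where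
  "nu l d i j j' = l i j * d i j' - l i j' * d i j"

definition nuhat :: "(nat \<Rightarrow> nat) \<Rightarrow> (nat \<Rightarrow> nat \<Rightarrow> int) \<Rightarrow> (nat \<Rightarrow> nat \<Rightarrow> int) \<Rightarrow> nat \<Rightarrow> nat \<Rightarrow> int" where
  "nuhat n l d i j = nu l d i j (n i)"

end

theory Submission
  imports Defs
begin

lemma part1:
  fixes a b c e A B :: int
  assumes "gcd A B = 1"
  shows "\<exists>\<alpha> \<beta>. a * e - c * b = \<alpha> * (a * B - A * b) - \<beta> * (c * B - A * e)"
proof -
  obtain u v where uv: "u * A + v * B = 1" using bezout_int[of A B] assms by auto
  have "a * e - c * b = (u * A + v * B) * (a * e - c * b)" using uv by simp
  also have "\<dots> = (u * c + v * e) * (a * B - A * b) - (u * a + v * b) * (c * B - A * e)"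
    by (simp add: algebra_simps)
  finally show ?thesis by blast
qed

lemma part2:
  fixes r :: nat and l d :: "nat \<Rightarrow> nat \<Rightarrow> int" and js :: "nat \<Rightarrow> nat" and N :: nat
  assumes hr: "r \<ge> 1" and i0: "i0 \<le> r" and g: "gcd (l i0 N) (d i0 N) = 1"
  shows "\<exists>\<beta> :: nat \<Rightarrow> int.
               mu r l d js = \<beta> i0 * mu r l d (js(i0 := N))
                 + (\<Sum>i1\<in>{0..r} - {i0}. \<beta> i1 * (l i0 (js i0) * d i0 N - l i0 N * d i0 (js i0))
                      * (\<Prod>i\<in>{0..r} - {i0, i1}. l i (js i)))"
proof -
  define I where "I = {0..r} - {i0}"
  define Q where "Q i1 = (\<Prod>i\<in>{0..r} - {i0, i1}. l i (js i))" for i1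
  define P where "P = (\<Prod>i\<in>I. l i (js i))"
  define S where "S = (\<Sum>i1\<in>I. d i1 (js i1) * Q i1)"
  define a where "a = l i0 (js i0)"
  define b where "b = d i0 (js i0)"
  define A where "A = l i0 N"
  define B where "B = d i0 N"
  obtain u v where uv: "u * A + v * B = 1" using bezout_int[of A B] g A_def B_def by auto
  have fin: "finite I" unfolding I_def by simp
  have "\<exists>k. k \<in> I"
  proof (cases "i0 = 0")
    case True then show ?thesis using hr by (intro exI[of _ 1]) (simp add: I_def)
  next
    case False then show ?thesis by (intro exI[of _ 0]) (simp add: I_def)
  qed
  then obtain k where k: "k \<in> I" by blast
  have PQ: "P = l k (js k) * Q k"
  proof -
    have "I = insert k ({0..r} - {i0, k})" using k unfolding I_def by auto
    thus ?thesis unfolding P_def Q_def using fin by (simp add: prod.insert)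
  qed
  have gen: "mu r l d js' = d i0 (js' i0) * P + l i0 (js' i0) * S"
    if agree: "\<And>i. i \<noteq> i0 \<Longrightarrow> js' i = js i" for js'
  proof -
    have split: "{0..r} = insert i0 I" using i0 unfolding I_def by auto
    have i0I: "i0 \<notin> I" unfolding I_def by auto
    have "mu r l d js' = d i0 (js' i0) * (\<Prod>i\<in>I. l i (js' i))
        + (\<Sum>i1\<in>I. d i1 (js' i1) * (\<Prod>i\<in>{0..r} - {i1}. l i (js' i)))"
      unfolding mu_def by (subst split, subst sum.insert[OF fin i0I]) (simp add: I_def)
    also have "(\<Prod>i\<in>I. l i (js' i)) = P" unfolding P_def
      by (rule prod.cong) (auto simp: I_def agree)
    also have "(\<Sum>i1\<in>I. d i1 (js' i1) * (\<Prod>i\<in>{0..r} - {i1}. l i (js' i)))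
        = (\<Sum>i1\<in>I. l i0 (js' i0) * (d i1 (js i1) * Q i1))"
    proof (rule sum.cong[OF refl])
      fix i1 assume h: "i1 \<in> I"
      have e: "{0..r} - {i1} = insert i0 ({0..r} - {i0, i1})" using h i0 unfolding I_def by auto
      have "(\<Prod>i\<in>{0..r} - {i1}. l i (js' i)) = l i0 (js' i0) * (\<Prod>i\<in>{0..r} - {i0, i1}. l i (js' i))"
        by (subst e, subst prod.insert) auto
      also have "(\<Prod>i\<in>{0..r} - {i0, i1}. l i (js' i)) = Q i1" unfolding Q_def
        by (rule prod.cong) (auto simp: agree)
      finally show "d i1 (js' i1) * (\<Prod>i\<in>{0..r} - {i1}. l i (js' i)) = l i0 (js' i0) * (d i1 (js i1) * Q i1)"
        using h agree[of i1] unfolding I_def by auto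
    qed
    also have "\<dots> = l i0 (js' i0) * S" unfolding S_def by (simp add: sum_distrib_left)
    finally show ?thesis .
  qed
  have m1: "mu r l d js = b * P + a * S" using gen[of js] a_def b_def by simp
  have m2: "mu r l d (js(i0 := N)) = B * P + A * S" using gen[of "js(i0 := N)"] A_def B_def by simp
  define \<beta> where "\<beta> i1 = (if i1 = i0 then u * a + v * b
      else v * d i1 (js i1) - (if i1 = k then u * l k (js k) else 0))" for i1
  have "(\<Sum>i1\<in>I. \<beta> i1 * (a * B - A * b) * Q i1)
      = (a * B - A * b) * (\<Sum>i1\<in>I. v * (d i1 (js i1) * Q i1) - (if i1 = k then u * l k (js k) * Q k else 0))"
    unfolding sum_distrib_left
    by (rule sum.cong[OF refl]) (auto simp: \<beta>_def I_def algebra_simps)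
  also have "\<dots> = (a * B - A * b) * (v * S - u * P)"
    using k fin by (simp add: sum_subtractf sum_distrib_left S_def PQ)
  finally have sumeq: "(\<Sum>i1\<in>I. \<beta> i1 * (a * B - A * b) * Q i1) = (a * B - A * b) * (v * S - u * P)" .
  have "mu r l d js = (u * A + v * B) * (b * P + a * S)" using uv m1 by simp
  also have "\<dots> = (u * a + v * b) * (B * P + A * S) + (a * B - A * b) * (v * S - u * P)"
    by (simp add: algebra_simps)
  finally have "mu r l d js = \<beta> i0 * mu r l d (js(i0 := N)) + (\<Sum>i1\<in>I. \<beta> i1 * (a * B - A * b) * Q i1)"
    using sumeq m2 by (simp add: \<beta>_def)
  thus ?thesis unfolding I_def Q_def a_def b_def A_def B_def by blast
qed

theorem lemma4p9:
  fixes r :: nat and n :: "nat \<Rightarrow> nat" and l d :: "nat \<Rightarrow> nat \<Rightarrow> int"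
  assumes hr: "r \<ge> 1"
    and hn: "\<And>i. i \<le> r \<Longrightarrow> n i \<ge> 1"
    and hl: "\<And>i j. i \<le> r \<Longrightarrow> 1 \<le> j \<Longrightarrow> j \<le> n i \<Longrightarrow> l i j \<ge> 1"
    and hgcd: "\<And>i j. i \<le> r \<Longrightarrow> 1 \<le> j \<Longrightarrow> j \<le> n i \<Longrightarrow> gcd (l i j) (d i j) = 1"
    and hdec: "\<And>i j j'. i \<le> r \<Longrightarrow> 1 \<le> j \<Longrightarrow> j < j' \<Longrightarrow> j' \<le> n i \<Longrightarrow>
               (of_int (d i j) / of_int (l i j) :: rat) > of_int (d i j') / of_int (l i j')"
  shows "(\<forall>i j j'. i \<le> r \<and> 1 \<le> j \<and> j \<le> n i \<and> 1 \<le> j' \<and> j' \<le> n i \<longrightarrow>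
            (\<exists>\<alpha> \<beta> :: int. nu l d i j j' = \<alpha> * nuhat n l d i j - \<beta> * nuhat n l d i j'))
       \<and> (\<forall>i0 js. i0 \<le> r \<and> (\<forall>i\<le>r. 1 \<le> js i \<and> js i \<le> n i) \<longrightarrow>
            (\<exists>\<beta> :: nat \<Rightarrow> int.
               mu r l d js = \<beta> i0 * mu r l d (js(i0 := n i0))
                 + (\<Sum>i1\<in>{0..r} - {i0}. \<beta> i1 * nuhat n l d i0 (js i0)
                      * (\<Prod>i\<in>{0..r} - {i0, i1}. l i (js i)))))"
proof (intro conjI allI impI)
  fix i j j' assume h: "i \<le> r \<and> 1 \<le> j \<and> j \<le> n i \<and> 1 \<le> j' \<and> j' \<le> n i"
  have "gcd (l i (n i)) (d i (n i)) = 1" using h hn hgcd by auto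
  from part1[OF this, of "l i j" "d i j'" "l i j'" "d i j"]
  show "\<exists>\<alpha> \<beta> :: int. nu l d i j j' = \<alpha> * nuhat n l d i j - \<beta> * nuhat n l d i j'"
    unfolding nuhat_def nu_def by (simp add: algebra_simps)
next
  fix i0 js assume h: "i0 \<le> r \<and> (\<forall>i\<le>r. 1 \<le> js i \<and> js i \<le> n i)"
  have i0r: "i0 \<le> r" using h by simp
  have "gcd (l i0 (n i0)) (d i0 (n i0)) = 1" using h hn hgcd by auto
  from part2[of r i0 l "n i0" d js, OF hr i0r this]
  show "\<exists>\<beta> :: nat \<Rightarrow> int.
               mu r l d js = \<beta> i0 * mu r l d (js(i0 := n i0))
                 + (\<Sum>i1\<in>{0..r} - {i0}. \<beta> i1 * nuhat n l d i0 (js i0)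
                      * (\<Prod>i\<in>{0..r} - {i0, i1}. l i (js i)))"
    unfolding nuhat_def nu_def by simp
qed

end
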